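(* Let $\{x^i\}_{i=1}^{n+1}$ and $\{y^i\}_{i=1}^{n+1}$ be two coordinate systems on open subsets of a manifold, related by a $C^2$ diffeomorphism $\phi$, and suppose a hypersurface is represented near a point both as the graph $x^{n+1}=f(x^1,\dots,x^n)$ and as the graph $y^{n+1}=g(y^1,\dots,y^n)$, with $f,g$ locally Lipschitz. If $\vec x_0=(x_0^1,\dots,x_0^n)$ is an Alexandrov point of $f$ and $(\vec y_0,g(\vec y_0))=\phi(\vec x_0,f(\vec x_0))$, then $\vec y_0$ is an Alexandrov point of $g$.
   Context: A point $x$ is an Alexandrov point of a function $f$ defined near $x$ in $\mathbb R^n$ if $f$ is differentiable at $x$ and there is a symmetric bilinear form $Q$ such that $f(y)-f(x)-df(x)(y-x)=Q(y-x,y-x)+o(|y-x|^2)$ as $y\to x$. The coordinate directions $\partial/\partial x^{n+1}$, $\partial/\partial y^{n+1}$ are not assumed to have any particular causal character. *)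

theory Defs
  imports "HOL-Analysis.Analysis"
begin

text \<open>Points of R^(n+1) are represented as pairs (x, t) with x in R^n = real^'n
  and t the (n+1)-st coordinate.\<close>

definition C1_on :: "'a::euclidean_space set \<Rightarrow> ('a \<Rightarrow> 'b::real_normed_vector) \<Rightarrow> bool" where
  "C1_on U h \<longleftrightarrow> (\<exists>D :: 'a \<Rightarrow> ('a \<Rightarrow>\<^sub>L 'b).
      (\<forall>x\<in>U. (h has_derivative blinfun_apply (D x)) (at x)) \<and> continuous_on U D)"

definition C2_on :: "'a::euclidean_space set \<Rightarrow> ('a \<Rightarrow> 'b::real_normed_vector) \<Rightarrow> bool" where
  "C2_on U h \<longleftrightarrow> (\<exists>D :: 'a \<Rightarrow> ('a \<Rightarrow>\<^sub>L 'b).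
      (\<forall>x\<in>U. (h has_derivative blinfun_apply (D x)) (at x)) \<and> C1_on U D)"

definition C2_diffeo :: "'a::euclidean_space set \<Rightarrow> 'a set \<Rightarrow> ('a \<Rightarrow> 'a) \<Rightarrow> bool" where
  "C2_diffeo U V h \<longleftrightarrow> open U \<and> open V \<and> h ` U = V \<and> C2_on U h \<and>
     (\<exists>k. C2_on V k \<and> (\<forall>x\<in>U. k (h x) = x) \<and> (\<forall>y\<in>V. h (k y) = y))"

definition locally_lipschitz_on :: "'a::metric_space set \<Rightarrow> ('a \<Rightarrow> real) \<Rightarrow> bool" where
  "locally_lipschitz_on A h \<longleftrightarrow> (\<forall>x\<in>A. \<exists>e>0. \<exists>L. L-lipschitz_on (cball x e \<inter> A) h)"

definition alexandrov_point :: "('a::euclidean_space \<Rightarrow> real) \<Rightarrow> 'a \<Rightarrow> bool" where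
  "alexandrov_point h x \<longleftrightarrow> (\<exists>L. (h has_derivative L) (at x) \<and>
     (\<exists>Q. bilinear Q \<and> (\<forall>u v. Q u v = Q v u) \<and>
        ((\<lambda>y. (h y - h x - L (y - x) - Q (y - x) (y - x)) / (norm (y - x))\<^sup>2) \<longlongrightarrow> 0) (at x)))"

definition graph_over :: "('a \<Rightarrow> real) \<Rightarrow> 'a set \<Rightarrow> ('a \<times> real) set" where
  "graph_over h A = {(x, h x) | x. x \<in> A}"

end

theory Submission
  imports Defs
begin


definition jet2 :: "('a::real_normed_vector \<Rightarrow> 'b::real_normed_vector) \<Rightarrow> 'a \<Rightarrow> ('a \<Rightarrow> 'b) \<Rightarrow> ('a \<Rightarrow> 'a \<Rightarrow> 'b) \<Rightarrow> bool" where
  "jet2 F p L Q \<longleftrightarrow> bounded_linear L \<and> bounded_bilinear Q \<and>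
     (\<forall>e>0. \<exists>d>0. \<forall>h. norm h < d \<longrightarrow> norm (F (p + h) - F p - L h - Q h h) \<le> e * (norm h)\<^sup>2)"

lemma bb_post:
  assumes M: "bounded_linear M" and Q: "bounded_bilinear Q"
  shows "bounded_bilinear (\<lambda>u v. M (Q u v))"
proof -
  interpret M: bounded_linear M by fact
  interpret Q: bounded_bilinear Q by fact
  obtain KM where KM: "\<And>x. norm (M x) \<le> norm x * KM" "KM > 0" using M.pos_bounded by blast
  obtain KQ where KQ: "\<And>a b. norm (Q a b) \<le> norm a * norm b * KQ" "KQ > 0" using Q.pos_bounded by blast
  show ?thesis
  proof
    show "\<exists>K. \<forall>a b. norm (M (Q a b)) \<le> norm a * norm b * K"
    proof (intro exI allI)
      fix a b
      have "norm (M (Q a b)) \<le> norm (Q a b) * KM" by (rule KM)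
      also have "\<dots> \<le> (norm a * norm b * KQ) * KM" using KQ KM by (intro mult_right_mono) auto
      finally show "norm (M (Q a b)) \<le> norm a * norm b * (KQ * KM)" by (simp add: ac_simps)
    qed
  qed (simp_all add: Q.add_left Q.add_right Q.scaleR_left Q.scaleR_right M.add M.scale)
qed

lemma bb_add:
  assumes Q: "bounded_bilinear Q" and R: "bounded_bilinear R"
  shows "bounded_bilinear (\<lambda>u v. Q u v + R u v)"
proof -
  interpret Q: bounded_bilinear Q by fact
  interpret R: bounded_bilinear R by fact
  obtain KQ where KQ: "\<And>a b. norm (Q a b) \<le> norm a * norm b * KQ" using Q.bounded by blast
  obtain KR where KR: "\<And>a b. norm (R a b) \<le> norm a * norm b * KR" using R.bounded by blast
  show ?thesis
  proof
    show "\<exists>K. \<forall>a b. norm (Q a b + R a b) \<le> norm a * norm b * K"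
    proof (intro exI allI)
      fix a b
      have "norm (Q a b + R a b) \<le> norm (Q a b) + norm (R a b)" by (rule norm_triangle_ineq)
      also have "\<dots> \<le> norm a * norm b * KQ + norm a * norm b * KR" using KQ KR by (intro add_mono)
      finally show "norm (Q a b + R a b) \<le> norm a * norm b * (KQ + KR)" by (simp add: algebra_simps)
    qed
  qed (simp_all add: Q.add_left Q.add_right Q.scaleR_left Q.scaleR_right
         R.add_left R.add_right R.scaleR_left R.scaleR_right algebra_simps)
qed

lemma jet2_bound:
  assumes "jet2 F p L Q"
  shows "\<exists>C>0. \<exists>d>0. \<forall>h. norm h < d \<longrightarrow> norm (F (p + h) - F p) \<le> C * norm h"
proof -
  from assms have L: "bounded_linear L" and Q: "bounded_bilinear Q"
    and E: "\<forall>e>0. \<exists>d>0. \<forall>h. norm h < d \<longrightarrow> norm (F (p + h) - F p - L h - Q h h) \<le> e * (norm h)\<^sup>2"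
    unfolding jet2_def by auto
  obtain KL where KL: "\<And>x. norm (L x) \<le> norm x * KL" "KL > 0" using bounded_linear.pos_bounded[OF L] by blast
  obtain KQ where KQ: "\<And>a b. norm (Q a b) \<le> norm a * norm b * KQ" "KQ > 0" using bounded_bilinear.pos_bounded[OF Q] by blast
  obtain d0 where d0: "d0 > 0" "\<And>h. norm h < d0 \<Longrightarrow> norm (F (p + h) - F p - L h - Q h h) \<le> 1 * (norm h)\<^sup>2"
    using E[rule_format, of 1] by auto
  show ?thesis
  proof (intro exI conjI allI impI)
    show "KL + KQ + 1 > 0" using KL KQ by simp
    show "min d0 1 > 0" using d0 by simp
    fix h :: 'a assume h: "norm h < min d0 1"
    have n1: "norm h \<le> 1" using h by simp
    have "norm (F (p + h) - F p) \<le> norm (F (p + h) - F p - L h - Q h h) + norm (L h) + norm (Q h h)"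
      by (rule order_trans[OF _ add_mono[OF norm_triangle_ineq order_refl]], rule order_trans[OF _ norm_triangle_ineq]) (simp add: algebra_simps)
    also have "\<dots> \<le> (norm h)\<^sup>2 + norm h * KL + norm h * norm h * KQ"
      using d0(2)[of h] h KL(1)[of h] KQ(1)[of h h] by (intro add_mono) auto
    also have "\<dots> \<le> norm h + norm h * KL + norm h * KQ"
      using n1 KQ(2) by (intro add_mono) (auto simp: power2_eq_square mult_left_le intro!: mult_right_mono mult_left_le)
    finally show "norm (F (p + h) - F p) \<le> (KL + KQ + 1) * norm h" by (simp add: algebra_simps)
  qed
qed



lemma jet2_local:
  assumes J: "jet2 F p L Q" and S: "open S" "p \<in> S" and eq: "\<And>x. x \<in> S \<Longrightarrow> F x = G x"
  shows "jet2 G p L Q"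
  unfolding jet2_def
proof (intro conjI allI impI)
  show "bounded_linear L" "bounded_bilinear Q" using J unfolding jet2_def by auto
  fix e :: real assume e: "e > 0"
  obtain d where d: "d > 0" "\<And>h. norm h < d \<Longrightarrow> norm (F (p + h) - F p - L h - Q h h) \<le> e * (norm h)\<^sup>2"
    using J e unfolding jet2_def by blast
  obtain r where r: "r > 0" "ball p r \<subseteq> S" using S open_contains_ball by blast
  show "\<exists>d>0. \<forall>h. norm h < d \<longrightarrow> norm (G (p + h) - G p - L h - Q h h) \<le> e * (norm h)\<^sup>2"
  proof (intro exI conjI allI impI)
    show "min d r > 0" using d r by simp
    fix h :: 'a assume h: "norm h < min d r"
    have "p + h \<in> S" using h r by (auto simp: dist_norm)
    then show "norm (G (p + h) - G p - L h - Q h h) \<le> e * (norm h)\<^sup>2"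
      using d(2)[of h] h eq[of "p+h"] eq[of p] S by auto
  qed
qed

lemma jet2_linpost:
  assumes J: "jet2 F p L Q" and M: "bounded_linear M"
  shows "jet2 (\<lambda>x. M (F x)) p (\<lambda>h. M (L h)) (\<lambda>u v. M (Q u v))"
  unfolding jet2_def
proof (intro conjI allI impI)
  interpret M: bounded_linear M by fact
  show "bounded_linear (\<lambda>h. M (L h))" using J M unfolding jet2_def
    by (simp add: bounded_linear_compose)
  show "bounded_bilinear (\<lambda>u v. M (Q u v))" using J M bb_post unfolding jet2_def by blast
  obtain KM where KM: "\<And>x. norm (M x) \<le> norm x * KM" "KM > 0" using M.pos_bounded by blast
  fix e :: real assume e: "e > 0"
  obtain d where d: "d > 0" "\<And>h. norm h < d \<Longrightarrow> norm (F (p + h) - F p - L h - Q h h) \<le> (e / KM) * (norm h)\<^sup>2"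
    using J e KM unfolding jet2_def by (meson divide_pos_pos)
  show "\<exists>d>0. \<forall>h. norm h < d \<longrightarrow> norm (M (F (p + h)) - M (F p) - M (L h) - M (Q h h)) \<le> e * (norm h)\<^sup>2"
  proof (intro exI conjI allI impI)
    show "d > 0" by fact
    fix h :: 'a assume h: "norm h < d"
    have "M (F (p + h)) - M (F p) - M (L h) - M (Q h h) = M (F (p + h) - F p - L h - Q h h)"
      by (simp add: M.diff)
    also have "norm \<dots> \<le> norm (F (p + h) - F p - L h - Q h h) * KM" by (rule KM)
    also have "\<dots> \<le> ((e / KM) * (norm h)\<^sup>2) * KM" using d(2)[OF h] KM by (intro mult_right_mono) auto
    also have "\<dots> = e * (norm h)\<^sup>2" using KM by simp
    finally show "norm (M (F (p + h)) - M (F p) - M (L h) - M (Q h h)) \<le> e * (norm h)\<^sup>2" .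
  qed
qed

lemma jet2_pair:
  fixes f :: "'a::real_normed_vector \<Rightarrow> real"
  assumes J: "jet2 f p L Q"
  shows "jet2 (\<lambda>x. (x, f x)) p (\<lambda>h. (h, L h)) (\<lambda>u v. (0, Q u v))"
  unfolding jet2_def
proof (intro conjI allI impI)
  show "bounded_linear (\<lambda>h. (h, L h))" using J unfolding jet2_def
    by (intro bounded_linear_Pair bounded_linear_ident) auto
  interpret Q: bounded_bilinear Q using J unfolding jet2_def by auto
  show "bounded_bilinear (\<lambda>u v. (0::'a, Q u v))"
  proof
    obtain K where "\<And>a b. norm (Q a b) \<le> norm a * norm b * K" using Q.bounded by blast
    then show "\<exists>K. \<forall>a b. norm ((0::'a, Q a b)) \<le> norm a * norm b * K" by (auto simp: norm_Pair)
  qed (simp_all add: Q.add_left Q.add_right Q.scaleR_left Q.scaleR_right)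
  fix e :: real assume e: "e > 0"
  obtain d where d: "d > 0" "\<And>h. norm h < d \<Longrightarrow> norm (f (p + h) - f p - L h - Q h h) \<le> e * (norm h)\<^sup>2"
    using J e unfolding jet2_def by blast
  show "\<exists>d>0. \<forall>h. norm h < d \<longrightarrow> norm ((p + h, f (p + h)) - (p, f p) - (h, L h) - (0, Q h h)) \<le> e * (norm h)\<^sup>2"
    using d by (auto simp: norm_Pair)
qed



lemma jet2_comp:
  assumes JF: "jet2 F p LF QF" and JG: "jet2 G (F p) LG QG"
  shows "jet2 (\<lambda>x. G (F x)) p (\<lambda>h. LG (LF h)) (\<lambda>u v. LG (QF u v) + QG (LF u) (LF v))"
  unfolding jet2_def
proof (intro conjI allI impI)
  have LF: "bounded_linear LF" and QF: "bounded_bilinear QF"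
    and EF: "\<forall>e>0. \<exists>d>0. \<forall>h. norm h < d \<longrightarrow> norm (F (p + h) - F p - LF h - QF h h) \<le> e * (norm h)\<^sup>2"
    using JF unfolding jet2_def by auto
  have LG: "bounded_linear LG" and QG: "bounded_bilinear QG"
    and EG: "\<forall>e>0. \<exists>d>0. \<forall>k. norm k < d \<longrightarrow> norm (G (F p + k) - G (F p) - LG k - QG k k) \<le> e * (norm k)\<^sup>2"
    using JG unfolding jet2_def by auto
  interpret LF: bounded_linear LF by fact
  interpret LG: bounded_linear LG by fact
  interpret QF: bounded_bilinear QF by fact
  interpret QG: bounded_bilinear QG by fact
  show "bounded_linear (\<lambda>h. LG (LF h))" using LF LG by (simp add: bounded_linear_compose)
  show "bounded_bilinear (\<lambda>u v. LG (QF u v) + QG (LF u) (LF v))"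
    by (rule bb_add[OF bb_post[OF LG QF] QG.comp[OF LF LF]])
  obtain KLF where KLF: "\<And>x. norm (LF x) \<le> norm x * KLF" "KLF > 0" using LF.pos_bounded by blast
  obtain KLG where KLG: "\<And>x. norm (LG x) \<le> norm x * KLG" "KLG > 0" using LG.pos_bounded by blast
  obtain KQF where KQF: "\<And>a b. norm (QF a b) \<le> norm a * norm b * KQF" "KQF > 0" using QF.pos_bounded by blast
  obtain KQG where KQG: "\<And>a b. norm (QG a b) \<le> norm a * norm b * KQG" "KQG > 0" using QG.pos_bounded by blast
  obtain C d1 where C: "C > 0" "d1 > 0" "\<And>h. norm h < d1 \<Longrightarrow> norm (F (p + h) - F p) \<le> C * norm h"
    using jet2_bound[OF JF] by blast
  fix e :: real assume e: "e > 0"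
  define e1 where "e1 = e / (3 * KLG)"
  have e1: "e1 > 0" using e KLG unfolding e1_def by simp
  obtain d2 where d2: "d2 > 0" "\<And>h. norm h < d2 \<Longrightarrow> norm (F (p + h) - F p - LF h - QF h h) \<le> e1 * (norm h)\<^sup>2"
    using EF e1 by blast
  define e2 where "e2 = e / (3 * C\<^sup>2)"
  have e2: "e2 > 0" using e C unfolding e2_def by simp
  obtain dG where dG: "dG > 0" "\<And>k. norm k < dG \<Longrightarrow> norm (G (F p + k) - G (F p) - LG k - QG k k) \<le> e2 * (norm k)\<^sup>2"
    using EG e2 by blast
  define d3 where "d3 = e / (3 * KQG * (KQF + e1) * (C + KLF))"
  have d3: "d3 > 0" using e KQG KQF e1 C KLF unfolding d3_def by simp
  show "\<exists>d>0. \<forall>h. norm h < d \<longrightarrow> norm (G (F (p + h)) - G (F p) - LG (LF h) - (LG (QF h h) + QG (LF h) (LF h))) \<le> e * (norm h)\<^sup>2"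
  proof (intro exI conjI allI impI)
    show "min (min d1 d2) (min d3 (dG / C)) > 0" using C d2 d3 dG by simp
    fix h :: 'a assume h: "norm h < min (min d1 d2) (min d3 (dG / C))"
    define k where "k = F (p + h) - F p"
    define r1 where "r1 = k - LF h - QF h h"
    define s where "s = k - LF h"
    define r2 where "r2 = G (F p + k) - G (F p) - LG k - QG k k"
    have nk: "norm k \<le> C * norm h" using C(3)[of h] h unfolding k_def by simp
    have nr1: "norm r1 \<le> e1 * (norm h)\<^sup>2" using d2(2)[of h] h unfolding r1_def k_def by simp
    have "norm k < dG"
    proof -
      have "C * norm h < C * (dG / C)" using h C by (intro mult_strict_left_mono) auto
      then show ?thesis using nk C by simp
    qed
    then have nr2: "norm r2 \<le> e2 * (norm k)\<^sup>2" using dG(2) unfolding r2_def by blast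
    have Fph: "F (p + h) = F p + k" unfolding k_def by simp
    have ks: "k = LF h + s" unfolding s_def by simp
    have cross: "QG k k - QG (LF h) (LF h) = QG s k + QG (LF h) s"
      unfolding ks by (simp add: QG.add_left QG.add_right)
    have decomp: "G (F (p + h)) - G (F p) - LG (LF h) - (LG (QF h h) + QG (LF h) (LF h))
        = r2 + LG r1 + (QG s k + QG (LF h) s)"
      unfolding Fph r2_def r1_def cross[symmetric] by (simp add: LG.diff LG.add algebra_simps)
    have ns: "norm s \<le> (KQF + e1) * (norm h)\<^sup>2"
    proof -
      have "s = QF h h + r1" unfolding s_def r1_def by simp
      then have "norm s \<le> norm (QF h h) + norm r1" by (simp add: norm_triangle_ineq)
      also have "\<dots> \<le> norm h * norm h * KQF + e1 * (norm h)\<^sup>2" using KQF(1)[of h h] nr1 by simp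
      finally show ?thesis by (simp add: power2_eq_square algebra_simps)
    qed
    have b1: "norm r2 \<le> e / 3 * (norm h)\<^sup>2"
    proof -
      have "(norm k)\<^sup>2 \<le> (C * norm h)\<^sup>2" using nk by (intro power_mono) auto
      then have "e2 * (norm k)\<^sup>2 \<le> e2 * (C * norm h)\<^sup>2" using e2 by (intro mult_left_mono) auto
      also have "\<dots> = e / 3 * (norm h)\<^sup>2" using C unfolding e2_def by (simp add: power_mult_distrib)
      finally show ?thesis using nr2 by linarith
    qed
    have b2: "norm (LG r1) \<le> e / 3 * (norm h)\<^sup>2"
    proof -
      have "norm (LG r1) \<le> norm r1 * KLG" by (rule KLG)
      also have "\<dots> \<le> e1 * (norm h)\<^sup>2 * KLG" using nr1 KLG by (intro mult_right_mono) auto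
      also have "\<dots> = e / 3 * (norm h)\<^sup>2" using KLG unfolding e1_def by simp
      finally show ?thesis .
    qed
    have b3: "norm (QG s k + QG (LF h) s) \<le> e / 3 * (norm h)\<^sup>2"
    proof -
      have "norm (QG s k + QG (LF h) s) \<le> norm s * norm k * KQG + norm (LF h) * norm s * KQG"
        using KQG(1)[of s k] KQG(1)[of "LF h" s] norm_triangle_ineq[of "QG s k" "QG (LF h) s"] by linarith
      also have "\<dots> = KQG * norm s * (norm k + norm (LF h))" by (simp add: algebra_simps)
      also have "\<dots> \<le> KQG * ((KQF + e1) * (norm h)\<^sup>2) * (C * norm h + norm h * KLF)"
        using ns nk KLF(1)[of h] KQG(2) KQF(2) e1 by (intro mult_mono add_mono) auto
      also have "\<dots> = (norm h)\<^sup>2 * (KQG * (KQF + e1) * (C + KLF) * norm h)" by (simp add: algebra_simps)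
      also have "\<dots> \<le> (norm h)\<^sup>2 * (KQG * (KQF + e1) * (C + KLF) * d3)"
        using h KQG KQF e1 C KLF by (intro mult_left_mono) auto
      also have "\<dots> = e / 3 * (norm h)\<^sup>2"
      proof -
        have P: "KQG * (KQF + e1) * (C + KLF) > 0" using KQG KQF e1 C KLF by simp
        have "KQG * (KQF + e1) * (C + KLF) * d3 = e / 3" unfolding d3_def using P
          by (simp add: field_simps)
        then show ?thesis by simp
      qed
      finally show ?thesis .
    qed
    have "norm (r2 + LG r1 + (QG s k + QG (LF h) s)) \<le> norm r2 + norm (LG r1) + norm (QG s k + QG (LF h) s)"
      by (meson norm_triangle_ineq add_mono order_trans order_refl)
    then show "norm (G (F (p + h)) - G (F p) - LG (LF h) - (LG (QF h h) + QG (LF h) (LF h))) \<le> e * (norm h)\<^sup>2"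
      unfolding decomp using b1 b2 b3 by linarith
  qed
qed



lemma C2_jet2:
  fixes \<phi> :: "'a::euclidean_space \<Rightarrow> 'b::real_normed_vector"
  assumes C2: "C2_on U \<phi>" and U: "open U" and pU: "p \<in> U"
  shows "\<exists>L Q. jet2 \<phi> p L Q"
proof -
  obtain D :: "'a \<Rightarrow> ('a \<Rightarrow>\<^sub>L 'b)" and D2 :: "'a \<Rightarrow> ('a \<Rightarrow>\<^sub>L ('a \<Rightarrow>\<^sub>L 'b))"
    where dphi: "\<And>x. x \<in> U \<Longrightarrow> (\<phi> has_derivative blinfun_apply (D x)) (at x)"
      and dD: "\<And>x. x \<in> U \<Longrightarrow> (D has_derivative blinfun_apply (D2 x)) (at x)"
    using C2 unfolding C2_on_def C1_on_def by blast
  define Q where "Q u v = (1/2::real) *\<^sub>R blinfun_apply (blinfun_apply (D2 p) u) v" for u v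
  have bbQ: "bounded_bilinear Q"
    unfolding Q_def
    by (rule bb_post[OF bounded_linear_scaleR_right bounded_bilinear.comp1[OF bounded_bilinear_blinfun_apply blinfun.bounded_linear_right]])
  have "jet2 \<phi> p (blinfun_apply (D p)) Q"
    unfolding jet2_def
  proof (intro conjI allI impI)
    show "bounded_linear (blinfun_apply (D p))" by (rule blinfun.bounded_linear_right)
    show "bounded_bilinear Q" by fact
    fix e :: real assume e: "e > 0"
    have "(\<lambda>h. norm (D (p + h) - D p - D2 p h) / norm h) \<midarrow>0\<rightarrow> 0"
      using dD[OF pU] unfolding has_derivative_at by blast
    then obtain d where d: "d > 0" "\<And>h. h \<noteq> 0 \<Longrightarrow> norm h < d \<Longrightarrow> norm (D (p + h) - D p - D2 p h) / norm h < e"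
      using e unfolding LIM_eq by force
    obtain r where r: "r > 0" "ball p r \<subseteq> U" using U pU open_contains_ball by blast
    show "\<exists>d>0. \<forall>h. norm h < d \<longrightarrow> norm (\<phi> (p + h) - \<phi> p - D p h - Q h h) \<le> e * (norm h)\<^sup>2"
    proof (intro exI conjI allI impI)
      show "min d r > 0" using d r by simp
      fix h :: 'a assume h: "norm h < min d r"
      show "norm (\<phi> (p + h) - \<phi> p - D p h - Q h h) \<le> e * (norm h)\<^sup>2"
      proof (cases "h = 0")
        case True then show ?thesis
          by (simp add: Q_def blinfun.zero_right blinfun.zero_left)
      next
        case False
        define \<psi> where "\<psi> t = \<phi> (p + t *\<^sub>R h) - t *\<^sub>R D p h - (t\<^sup>2 / 2) *\<^sub>R D2 p h h" for t :: real
        define \<psi>' where "\<psi>' t = D (p + t *\<^sub>R h) h - D p h - t *\<^sub>R D2 p h h" for t :: real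
        have inU: "p + t *\<^sub>R h \<in> U" if "t \<in> {0..1}" for t
        proof -
          have "norm (t *\<^sub>R h) \<le> norm h" using that by (auto intro: mult_left_le_one_le)
          then have "p + t *\<^sub>R h \<in> ball p r" using h by (auto simp: dist_norm)
          then show ?thesis using r by blast
        qed
        have der: "(\<psi> has_vector_derivative \<psi>' t) (at t within {0..1})" if t: "t \<in> {0..1}" for t
        proof -
          have lin: "((\<lambda>t. p + t *\<^sub>R h) has_derivative (\<lambda>s. s *\<^sub>R h)) (at t within {0..1})"
            by (auto intro!: derivative_eq_intros)
          have c: "((\<lambda>t. \<phi> (p + t *\<^sub>R h)) has_derivative (\<lambda>s. D (p + t *\<^sub>R h) (s *\<^sub>R h))) (at t within {0..1})"
            using has_derivative_compose[OF lin dphi[OF inU[OF t]]] by simp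
          have d1: "((\<lambda>t. t *\<^sub>R D p h) has_derivative (\<lambda>s. s *\<^sub>R D p h)) (at t within {0..1})"
            by (auto intro!: derivative_eq_intros)
          have d2: "((\<lambda>t. (t\<^sup>2 / 2) *\<^sub>R D2 p h h) has_derivative (\<lambda>s. (s * t) *\<^sub>R D2 p h h)) (at t within {0..1})"
            by (auto intro!: derivative_eq_intros simp: power2_eq_square)
          have "(\<psi> has_derivative (\<lambda>s. D (p + t *\<^sub>R h) (s *\<^sub>R h) - s *\<^sub>R D p h - (s * t) *\<^sub>R D2 p h h)) (at t within {0..1})"
            unfolding \<psi>_def by (intro has_derivative_diff c d1 d2)
          moreover have "(\<lambda>s. D (p + t *\<^sub>R h) (s *\<^sub>R h) - s *\<^sub>R D p h - (s * t) *\<^sub>R D2 p h h) = (\<lambda>s. s *\<^sub>R \<psi>' t)"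
            by (auto simp: \<psi>'_def blinfun.scaleR_right algebra_simps)
          ultimately have "(\<psi> has_derivative (\<lambda>s. s *\<^sub>R \<psi>' t)) (at t within {0..1})" by simp
          then show ?thesis unfolding has_vector_derivative_def .
        qed
        have bnd: "norm (\<psi>' t - \<psi>' 0) \<le> e * (norm h)\<^sup>2" if t: "t \<in> {0..1}" for t
        proof (cases "t = 0")
          case True then show ?thesis using e by (simp add: \<psi>'_def)
        next
          case False
          with t have t0: "t > 0" "t \<le> 1" by auto
          have "\<psi>' t - \<psi>' 0 = (D (p + t *\<^sub>R h) - D p - D2 p (t *\<^sub>R h)) h"
            by (simp add: \<psi>'_def blinfun.diff_left blinfun.scaleR_right blinfun.scaleR_left)
          also have "norm \<dots> \<le> norm (D (p + t *\<^sub>R h) - D p - D2 p (t *\<^sub>R h)) * norm h"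
            by (rule norm_blinfun)
          also have "\<dots> \<le> (e * norm (t *\<^sub>R h)) * norm h"
          proof (rule mult_right_mono)
            have th: "t *\<^sub>R h \<noteq> 0" "norm (t *\<^sub>R h) < d" using t0 False \<open>h \<noteq> 0\<close> h
              by (auto intro: le_less_trans[OF mult_left_le_one_le])
            have "norm (D (p + t *\<^sub>R h) - D p - D2 p (t *\<^sub>R h)) / norm (t *\<^sub>R h) < e"
              using d(2)[OF th] .
            then show "norm (D (p + t *\<^sub>R h) - D p - D2 p (t *\<^sub>R h)) \<le> e * norm (t *\<^sub>R h)"
              using th(1) by (simp add: divide_less_eq less_imp_le)
          qed simp
          also have "\<dots> \<le> (e * norm h) * norm h"
            using t0 e by (intro mult_right_mono mult_left_mono) (auto intro: mult_left_le_one_le)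
          finally show ?thesis by (simp add: power2_eq_square ac_simps)
        qed
        have "norm (\<psi> 1 - \<psi> 0 - (1 - 0) *\<^sub>R \<psi>' 0) \<le> norm (1 - 0::real) * (e * (norm h)\<^sup>2)"
          by (rule vector_differentiable_bound_linearization[OF der _ bnd]) (auto simp: closed_segment_eq_real_ivl)
        moreover have "\<psi> 1 - \<psi> 0 - (1 - 0) *\<^sub>R \<psi>' 0 = \<phi> (p + h) - \<phi> p - D p h - Q h h"
          by (simp add: \<psi>_def \<psi>'_def Q_def)
        ultimately show ?thesis by simp
      qed
    qed
  qed
  then show ?thesis by blast
qed



lemma jet2_inverse:
  fixes Y :: "'a::real_normed_vector \<Rightarrow> 'b::real_normed_vector" and X :: "'b \<Rightarrow> 'a"
  assumes JY: "jet2 Y x0 a b" and ai: "bounded_linear ai" and aia: "\<And>v. ai (a v) = v"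
    and Xy0: "X y0 = x0" and Yx0: "Y x0 = y0"
    and inv: "\<delta>1 > 0" "\<And>y. norm (y - y0) < \<delta>1 \<Longrightarrow> Y (X y) = y"
    and lip: "K > 0" "\<delta>2 > 0" "\<And>y. norm (y - y0) < \<delta>2 \<Longrightarrow> norm (X y - x0) \<le> K * norm (y - y0)"
  shows "jet2 X y0 ai (\<lambda>u v. - ai (b (ai u) (ai v)))"
  unfolding jet2_def
proof (intro conjI allI impI)
  have bl: "bounded_linear a" and bb: "bounded_bilinear b"
    and EY: "\<forall>e>0. \<exists>d>0. \<forall>h. norm h < d \<longrightarrow> norm (Y (x0 + h) - Y x0 - a h - b h h) \<le> e * (norm h)\<^sup>2"
    using JY unfolding jet2_def by auto
  interpret ai: bounded_linear ai by fact
  interpret b: bounded_bilinear b by fact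
  show "bounded_linear ai" by fact
  show "bounded_bilinear (\<lambda>u v. - ai (b (ai u) (ai v)))"
    using bb_post[OF bounded_linear_minus[OF ai] b.comp[OF ai ai]] by simp
  obtain Ka where Ka: "\<And>x. norm (ai x) \<le> norm x * Ka" "Ka > 0" using ai.pos_bounded by blast
  obtain Kb where Kb: "\<And>u v. norm (b u v) \<le> norm u * norm v * Kb" "Kb > 0" using b.pos_bounded by blast
  fix e :: real assume e: "e > 0"
  define e1 where "e1 = min 1 (e / (2 * Ka * K\<^sup>2))"
  have e1: "e1 > 0" "e1 \<le> 1" "Ka * e1 * K\<^sup>2 \<le> e / 2"
  proof -
    show "e1 > 0" "e1 \<le> 1" using e Ka lip unfolding e1_def by auto
    have "e1 \<le> e / (2 * Ka * K\<^sup>2)" unfolding e1_def by simp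
    then have "Ka * K\<^sup>2 * e1 \<le> Ka * K\<^sup>2 * (e / (2 * Ka * K\<^sup>2))" using Ka lip by (intro mult_left_mono) auto
    also have "\<dots> = e / 2" using Ka lip by (simp add: field_simps)
    finally show "Ka * e1 * K\<^sup>2 \<le> e / 2" by (simp add: ac_simps)
  qed
  obtain dY where dY: "dY > 0" "\<And>h. norm h < dY \<Longrightarrow> norm (Y (x0 + h) - Y x0 - a h - b h h) \<le> e1 * (norm h)\<^sup>2"
    using EY e1 by blast
  define P where "P = Ka * (Kb + 1) * K\<^sup>2"
  have P: "P > 0" unfolding P_def using Ka Kb lip by simp
  define M where "M = Ka * Kb * P * (Ka + K)"
  have M: "M > 0" using P Kb Ka lip unfolding M_def by simp
  define d3 where "d3 = e / (2 * M)"
  have d3: "d3 > 0" using e M unfolding d3_def by simp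
  have d3': "M * d3 = e / 2" using M unfolding d3_def by simp
  show "\<exists>d>0. \<forall>k. norm k < d \<longrightarrow> norm (X (y0 + k) - X y0 - ai k - - ai (b (ai k) (ai k))) \<le> e * (norm k)\<^sup>2"
  proof (intro exI conjI allI impI)
    show "min (min \<delta>1 \<delta>2) (min (dY / K) d3) > 0" using inv lip dY d3 by simp
    fix k :: 'b assume k: "norm k < min (min \<delta>1 \<delta>2) (min (dY / K) d3)"
    define h where "h = X (y0 + k) - x0"
    define w where "w = ai k"
    have nh: "norm h \<le> K * norm k" using lip(3)[of "y0 + k"] k unfolding h_def by simp
    have "K * norm k < K * (dY / K)" using k lip by (intro mult_strict_left_mono) auto
    then have "norm h < dY" using nh lip by simp
    then have nr: "norm (Y (x0 + h) - Y x0 - a h - b h h) \<le> e1 * (norm h)\<^sup>2" by (rule dY(2))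
    have Yh: "Y (x0 + h) = y0 + k" unfolding h_def using inv(2)[of "y0 + k"] k by simp
    define r where "r = k - a h - b h h"
    have nr': "norm r \<le> e1 * (norm h)\<^sup>2" using nr unfolding r_def Yh Yx0 by simp
    have nh2: "(norm h)\<^sup>2 \<le> K\<^sup>2 * (norm k)\<^sup>2" using nh by (metis norm_ge_zero power_mono power_mult_distrib)
    define t where "t = w - h"
    have teq: "t = ai (b h h) + ai r"
    proof -
      have "k = a h + b h h + r" unfolding r_def by simp
      then have "ai k = h + ai (b h h) + ai r" by (simp add: ai.add aia)
      then show ?thesis unfolding t_def w_def by simp
    qed
    have nt: "norm t \<le> P * (norm k)\<^sup>2"
    proof -
      have "norm t \<le> norm (b h h) * Ka + norm r * Ka"
        unfolding teq using Ka(1)[of "b h h"] Ka(1)[of r] norm_triangle_ineq[of "ai (b h h)" "ai r"] by linarith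
      also have "\<dots> \<le> (norm h * norm h * Kb) * Ka + (1 * (norm h)\<^sup>2) * Ka"
        using Kb(1)[of h h] nr' e1 Ka order_trans[OF nr' mult_left_le_one_le[of "(norm h)\<^sup>2" e1]]
        by (intro add_mono mult_right_mono) auto
      also have "\<dots> = Ka * (Kb + 1) * (norm h)\<^sup>2" by (simp add: power2_eq_square algebra_simps)
      also have "\<dots> \<le> Ka * (Kb + 1) * (K\<^sup>2 * (norm k)\<^sup>2)" using nh2 Ka Kb by (intro mult_left_mono) auto
      finally show ?thesis unfolding P_def by (simp add: ac_simps)
    qed
    have decomp: "X (y0 + k) - X y0 - ai k - - ai (b (ai k) (ai k)) = ai (b t w + b h t) - ai r"
    proof -
      have wht: "w = h + t" unfolding t_def by simp
      have "b w w - b h h = b t w + b h t" unfolding wht by (simp add: b.add_left b.add_right)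
      then have "ai (b w w) - ai (b h h) = ai (b t w + b h t)" by (simp add: ai.diff[symmetric])
      moreover have "X (y0 + k) - X y0 - ai k = - ai (b h h) - ai r" using teq unfolding t_def w_def h_def Xy0 by (simp add: algebra_simps)
      ultimately show ?thesis unfolding w_def by (simp add: algebra_simps)
    qed
    have nw: "norm w \<le> Ka * norm k" using Ka(1)[of k] unfolding w_def by (simp add: ac_simps)
    have B1: "norm (ai (b t w + b h t)) \<le> e / 2 * (norm k)\<^sup>2"
    proof -
      have "norm (b t w + b h t) \<le> norm t * norm w * Kb + norm h * norm t * Kb"
        using Kb(1)[of t w] Kb(1)[of h t] norm_triangle_ineq[of "b t w" "b h t"] by linarith
      also have "\<dots> = Kb * norm t * (norm w + norm h)" by (simp add: algebra_simps)
      also have "\<dots> \<le> Kb * (P * (norm k)\<^sup>2) * (Ka * norm k + K * norm k)"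
        using nt nw nh Kb P by (intro mult_mono add_mono mult_left_mono) auto
      finally have "norm (ai (b t w + b h t)) \<le> (Kb * (P * (norm k)\<^sup>2) * (Ka * norm k + K * norm k)) * Ka"
        using Ka(1)[of "b t w + b h t"] Ka(2) by (meson mult_right_mono less_imp_le order_trans)
      also have "\<dots> = (norm k)\<^sup>2 * (M * norm k)" unfolding M_def by (simp add: algebra_simps)
      also have "\<dots> \<le> (norm k)\<^sup>2 * (M * d3)"
        using k M by (intro mult_left_mono) auto
      finally show ?thesis unfolding d3' by (simp add: ac_simps)
    qed
    have B2: "norm (ai r) \<le> e / 2 * (norm k)\<^sup>2"
    proof -
      have "norm (ai r) \<le> norm r * Ka" by (rule Ka)
      also have "\<dots> \<le> (e1 * (K\<^sup>2 * (norm k)\<^sup>2)) * Ka" using nr' nh2 e1 Ka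
        by (intro mult_right_mono) (auto intro: order_trans[OF _ mult_left_mono])
      also have "\<dots> = (Ka * e1 * K\<^sup>2) * (norm k)\<^sup>2" by (simp add: ac_simps)
      also have "\<dots> \<le> e / 2 * (norm k)\<^sup>2" using e1 by (intro mult_right_mono) auto
      finally show ?thesis .
    qed
    show "norm (X (y0 + k) - X y0 - ai k - - ai (b (ai k) (ai k))) \<le> e * (norm k)\<^sup>2"
      unfolding decomp using norm_triangle_ineq4[of "ai (b t w + b h t)" "ai r"] B1 B2 by linarith
  qed
qed



lemma jet2_inj:
  fixes Y :: "'a::real_normed_vector \<Rightarrow> 'b::real_normed_vector" and X :: "'b \<Rightarrow> 'a"
  assumes JY: "jet2 Y x0 a b" and Yx0: "Y x0 = y0"
    and left: "\<rho> > 0" "\<And>x. norm (x - x0) < \<rho> \<Longrightarrow> X (Y x) = x"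
    and lip: "K > 0" "\<delta>2 > 0" "\<And>y. norm (y - y0) < \<delta>2 \<Longrightarrow> norm (X y - x0) \<le> K * norm (y - y0)"
    and av: "a v = 0"
  shows "v = 0"
proof (rule ccontr)
  assume v: "v \<noteq> 0"
  have bl: "bounded_linear a" and bb: "bounded_bilinear b"
    and EY: "\<forall>e>0. \<exists>d>0. \<forall>h. norm h < d \<longrightarrow> norm (Y (x0 + h) - Y x0 - a h - b h h) \<le> e * (norm h)\<^sup>2"
    using JY unfolding jet2_def by auto
  interpret a: bounded_linear a by fact
  interpret b: bounded_bilinear b by fact
  obtain Kb where Kb: "\<And>u v. norm (b u v) \<le> norm u * norm v * Kb" "Kb > 0" using b.pos_bounded by blast
  obtain C d1 where C: "C > 0" "d1 > 0" "\<And>h. norm h < d1 \<Longrightarrow> norm (Y (x0 + h) - Y x0) \<le> C * norm h"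
    using jet2_bound[OF JY] by blast
  obtain d where d: "d > 0" "\<And>h. norm h < d \<Longrightarrow> norm (Y (x0 + h) - Y x0 - a h - b h h) \<le> 1 * (norm h)\<^sup>2"
    using EY by (meson zero_less_one)
  define m where "m = min (min \<rho> d1) (min d (min (\<delta>2 / C) (1 / (K * (Kb + 1)))))"
  have m: "m > 0" unfolding m_def using left C d lip Kb by simp
  define h where "h = (m / (2 * norm v)) *\<^sub>R v"
  have nh: "norm h = m / 2" unfolding h_def using v m by simp
  have hlt: "norm h < m" using nh m by simp
  have ah: "a h = 0" unfolding h_def by (simp add: a.scale av)
  have eq: "Y (x0 + h) - y0 = (Y (x0 + h) - Y x0 - a h - b h h) + b h h" using ah Yx0 by simp
  have "norm (Y (x0 + h) - y0) \<le> norm (Y (x0 + h) - Y x0 - a h - b h h) + norm (b h h)"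
    by (subst eq) (rule norm_triangle_ineq)
  moreover have "norm (Y (x0 + h) - Y x0 - a h - b h h) \<le> 1 * (norm h)\<^sup>2"
    using d(2)[of h] hlt unfolding m_def by auto
  ultimately have "norm (Y (x0 + h) - y0) \<le> (norm h)\<^sup>2 + norm h * norm h * Kb"
    using Kb(1)[of h h] by linarith
  then have nY: "norm (Y (x0 + h) - y0) \<le> (Kb + 1) * (norm h)\<^sup>2" by (simp add: power2_eq_square algebra_simps)
  have "norm (Y (x0 + h) - y0) \<le> C * norm h" using C(3)[of h] hlt Yx0 unfolding m_def by auto
  also have "\<dots> < C * (\<delta>2 / C)" using hlt C unfolding m_def by (intro mult_strict_left_mono) auto
  finally have "norm (Y (x0 + h) - y0) < \<delta>2" using C by simp
  then have "norm (X (Y (x0 + h)) - x0) \<le> K * norm (Y (x0 + h) - y0)" by (rule lip(3))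
  moreover have "X (Y (x0 + h)) = x0 + h" using left(2)[of "x0 + h"] hlt unfolding m_def by auto
  ultimately have "norm h \<le> K * norm (Y (x0 + h) - y0)" by simp
  also have "\<dots> \<le> K * ((Kb + 1) * (norm h)\<^sup>2)" using nY lip by (intro mult_left_mono) auto
  finally have "norm h \<le> K * ((Kb + 1) * (norm h)\<^sup>2)" .
  then have "norm h * 1 \<le> norm h * (K * (Kb + 1) * norm h)" by (simp add: power2_eq_square ac_simps)
  then have "1 \<le> K * (Kb + 1) * norm h" using nh m by (subst (asm) mult_le_cancel_left_pos) auto
  moreover have "K * (Kb + 1) * norm h < K * (Kb + 1) * (1 / (K * (Kb + 1)))"
    using hlt lip Kb unfolding m_def by (intro mult_strict_left_mono) auto
  ultimately show False using lip Kb by simp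
qed

lemma jet2_invertible:
  fixes Y :: "'a::euclidean_space \<Rightarrow> 'a" and X :: "'a \<Rightarrow> 'a"
  assumes JY: "jet2 Y x0 a b" and Yx0: "Y x0 = y0"
    and left: "\<rho> > 0" "\<And>x. norm (x - x0) < \<rho> \<Longrightarrow> X (Y x) = x"
    and lip: "K > 0" "\<delta>2 > 0" "\<And>y. norm (y - y0) < \<delta>2 \<Longrightarrow> norm (X y - x0) \<le> K * norm (y - y0)"
  shows "\<exists>ai. bounded_linear ai \<and> (\<forall>v. ai (a v) = v)"
proof -
  have bl: "bounded_linear a" using JY unfolding jet2_def by auto
  interpret a: bounded_linear a by fact
  have "linear a" using bl by (simp add: bounded_linear.linear)
  moreover have "inj a"
  proof (rule injI)
    fix u v assume "a u = a v"
    then have "a (u - v) = 0" by (simp add: a.diff)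
    then have "u - v = 0" using jet2_inj[where v="u-v", OF JY Yx0 left lip] by simp
    then show "u = v" by simp
  qed
  ultimately obtain ai where "linear ai" "\<forall>x. ai (a x) = x"
    using linear_injective_isomorphism by metis
  then show ?thesis using linear_conv_bounded_linear by blast
qed



lemma alex_jet2:
  fixes f :: "'a::euclidean_space \<Rightarrow> real"
  assumes "alexandrov_point f x"
  shows "\<exists>L Q. jet2 f x L Q"
proof -
  obtain L Q where dL: "(f has_derivative L) (at x)" and bQ: "bilinear Q"
    and lim: "((\<lambda>y. (f y - f x - L (y - x) - Q (y - x) (y - x)) / (norm (y - x))\<^sup>2) \<longlongrightarrow> 0) (at x)"
    using assms unfolding alexandrov_point_def by blast
  have bbQ: "bounded_bilinear Q" using bQ bilinear_conv_bounded_bilinear by blast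
  interpret Q: bounded_bilinear Q by fact
  have "jet2 f x L Q"
    unfolding jet2_def
  proof (intro conjI allI impI)
    show "bounded_linear L" using dL by (rule has_derivative_bounded_linear)
    show "bounded_bilinear Q" by fact
    fix e :: real assume e: "e > 0"
    obtain s where s: "s > 0" "\<And>y. y \<noteq> x \<Longrightarrow> norm (y - x) < s \<Longrightarrow>
        norm ((f y - f x - L (y - x) - Q (y - x) (y - x)) / (norm (y - x))\<^sup>2 - 0) < e"
      using lim e unfolding LIM_eq by blast
    show "\<exists>d>0. \<forall>h. norm h < d \<longrightarrow> norm (f (x + h) - f x - L h - Q h h) \<le> e * (norm h)\<^sup>2"
    proof (intro exI conjI allI impI)
      show "s > 0" by fact
      fix h :: 'a assume h: "norm h < s"
      show "norm (f (x + h) - f x - L h - Q h h) \<le> e * (norm h)\<^sup>2"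
      proof (cases "h = 0")
        case True
        have "L 0 = 0" using \<open>bounded_linear L\<close> by (rule linear_simps)
        then show ?thesis using True by (simp add: Q.zero_left)
      next
        case False
        have "norm ((f (x + h) - f x - L h - Q h h) / (norm h)\<^sup>2) < e"
          using s(2)[of "x + h"] h False by simp
        then have "\<bar>f (x + h) - f x - L h - Q h h\<bar> / (norm h)\<^sup>2 < e" by simp
        then show ?thesis using False by (simp add: divide_less_eq less_imp_le)
      qed
    qed
  qed
  then show ?thesis by blast
qed

lemma jet2_alex:
  fixes g :: "'a::euclidean_space \<Rightarrow> real"
  assumes J: "jet2 g y L Q"
  shows "alexandrov_point g y"
proof -
  have bL: "bounded_linear L" and bQ: "bounded_bilinear Q"
    and E: "\<forall>e>0. \<exists>d>0. \<forall>h. norm h < d \<longrightarrow> norm (g (y + h) - g y - L h - Q h h) \<le> e * (norm h)\<^sup>2"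
    using J unfolding jet2_def by auto
  interpret Q: bounded_bilinear Q by fact
  obtain KQ where KQ: "\<And>a b. norm (Q a b) \<le> norm a * norm b * KQ" "KQ > 0" using Q.pos_bounded by blast
  define Q' where "Q' u v = (Q u v + Q v u) / 2" for u v
  have bbQ': "bounded_bilinear Q'"
  proof -
    have "bounded_bilinear (\<lambda>u v. (1/2) * (Q u v + Q v u))"
      by (rule bb_post[OF bounded_linear_mult_right bb_add[OF bQ Q.flip]])
    then show ?thesis unfolding Q'_def by (simp add: field_simps)
  qed
  have Q'hh: "Q' h h = Q h h" for h unfolding Q'_def by simp
  have der: "(g has_derivative L) (at y)"
    unfolding has_derivative_at
  proof (intro conjI)
    show "bounded_linear L" by fact
    show "(\<lambda>h. norm (g (y + h) - g y - L h) / norm h) \<midarrow>0\<rightarrow> 0"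
      unfolding LIM_eq
    proof (intro allI impI)
      fix r :: real assume r: "r > 0"
      obtain d where d: "d > 0" "\<And>h. norm h < d \<Longrightarrow> norm (g (y + h) - g y - L h - Q h h) \<le> 1 * (norm h)\<^sup>2"
        using E by (meson zero_less_one)
      show "\<exists>s>0. \<forall>h. h \<noteq> 0 \<and> norm (h - 0) < s \<longrightarrow> norm (norm (g (y + h) - g y - L h) / norm h - 0) < r"
      proof (intro exI conjI allI impI)
        show "min d (r / (KQ + 1)) > 0" using d r KQ by simp
        fix h :: 'a assume h: "h \<noteq> 0 \<and> norm (h - 0) < min d (r / (KQ + 1))"
        have nh: "norm h > 0" using h by simp
        have "norm (g (y + h) - g y - L h) \<le> norm (g (y + h) - g y - L h - Q h h) + norm (Q h h)"
          using norm_triangle_ineq[of "g (y + h) - g y - L h - Q h h" "Q h h"] by simp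
        also have "\<dots> \<le> 1 * (norm h)\<^sup>2 + norm h * norm h * KQ" using d(2)[of h] h KQ(1)[of h h] by (intro add_mono) auto
        also have "\<dots> = norm h * ((KQ + 1) * norm h)" by (simp add: power2_eq_square algebra_simps)
        also have "\<dots> < norm h * ((KQ + 1) * (r / (KQ + 1)))"
          using h nh KQ by (intro mult_strict_left_mono) auto
        also have "\<dots> = norm h * r" using KQ by simp
        finally have "norm (g (y + h) - g y - L h) < norm h * r" .
        then show "norm (norm (g (y + h) - g y - L h) / norm h - 0) < r"
          using nh by (simp add: divide_less_eq ac_simps)
      qed
    qed
  qed
  have lim: "((\<lambda>z. (g z - g y - L (z - y) - Q' (z - y) (z - y)) / (norm (z - y))\<^sup>2) \<longlongrightarrow> 0) (at y)"
    unfolding LIM_eq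
  proof (intro allI impI)
    fix r :: real assume r: "r > 0"
    obtain d where d: "d > 0" "\<And>h. norm h < d \<Longrightarrow> norm (g (y + h) - g y - L h - Q h h) \<le> (r / 2) * (norm h)\<^sup>2"
      using E r by (meson half_gt_zero)
    show "\<exists>s>0. \<forall>z. z \<noteq> y \<and> norm (z - y) < s \<longrightarrow> norm ((g z - g y - L (z - y) - Q' (z - y) (z - y)) / (norm (z - y))\<^sup>2 - 0) < r"
    proof (intro exI conjI allI impI)
      show "d > 0" by fact
      fix z assume z: "z \<noteq> y \<and> norm (z - y) < d"
      have nz: "norm (z - y) > 0" using z by simp
      have "\<bar>g z - g y - L (z - y) - Q (z - y) (z - y)\<bar> \<le> (r / 2) * (norm (z - y))\<^sup>2"
        using d(2)[of "z - y"] z by simp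
      also have "\<dots> < r * (norm (z - y))\<^sup>2" using r nz by simp
      finally show "norm ((g z - g y - L (z - y) - Q' (z - y) (z - y)) / (norm (z - y))\<^sup>2 - 0) < r"
        using nz by (simp add: Q'hh divide_less_eq)
    qed
  qed
  have "bilinear Q'" using bbQ' bilinear_conv_bounded_bilinear by blast
  moreover have "\<forall>u v. Q' u v = Q' v u" unfolding Q'_def by (simp add: add.commute)
  ultimately show ?thesis unfolding alexandrov_point_def using der lim by blast
qed



lemma deriv_lip:
  fixes k :: "'a::real_normed_vector \<Rightarrow> 'b::real_normed_vector"
  assumes "(k has_derivative D) (at q0)"
  shows "\<exists>K>0. \<exists>\<delta>>0. \<forall>q. norm (q - q0) < \<delta> \<longrightarrow> norm (k q - k q0) \<le> K * norm (q - q0)"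
proof -
  have bD: "bounded_linear D" and lim: "(\<lambda>h. norm (k (q0 + h) - k q0 - D h) / norm h) \<midarrow>0\<rightarrow> 0"
    using assms unfolding has_derivative_at by auto
  obtain KD where KD: "\<And>x. norm (D x) \<le> norm x * KD" "KD > 0" using bounded_linear.pos_bounded[OF bD] by blast
  obtain s where s: "s > 0" "\<And>h. h \<noteq> 0 \<Longrightarrow> norm h < s \<Longrightarrow> norm (norm (k (q0 + h) - k q0 - D h) / norm h - 0) < 1"
    using lim unfolding LIM_eq by (metis zero_less_one diff_zero)
  show ?thesis
  proof (intro exI conjI allI impI)
    show "KD + 1 > 0" "s > 0" using KD s by auto
    fix q assume q: "norm (q - q0) < s"
    show "norm (k q - k q0) \<le> (KD + 1) * norm (q - q0)"
    proof (cases "q = q0")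
      case True then show ?thesis by simp
    next
      case False
      define h where "h = q - q0"
      have h0: "h \<noteq> 0" "norm h > 0" using False unfolding h_def by auto
      have "norm (k (q0 + h) - k q0 - D h) / norm h < 1" using s(2)[of h] h0 q unfolding h_def by simp
      then have a: "norm (k (q0 + h) - k q0 - D h) \<le> norm h" using h0 by (simp add: divide_less_eq)
      have "norm (k (q0 + h) - k q0) \<le> norm (k (q0 + h) - k q0 - D h) + norm (D h)"
        using norm_triangle_ineq[of "k (q0 + h) - k q0 - D h" "D h"] by simp
      also have "\<dots> \<le> norm h + norm h * KD" using a KD(1)[of h] by (intro add_mono)
      finally show ?thesis unfolding h_def by (simp add: algebra_simps)
    qed
  qed
qed



theorem mainTheorem5:
  fixes f g :: "real^'n \<Rightarrow> real"
    and \<phi> :: "(real^'n) \<times> real \<Rightarrow> (real^'n) \<times> real"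
    and A B :: "(real^'n) set"
    and U V N :: "((real^'n) \<times> real) set"
    and x0 y0 :: "real^'n"
  assumes diffeo: "C2_diffeo U V \<phi>"
    and A_open: "open A" and B_open: "open B"
    and f_lip: "locally_lipschitz_on A f" and g_lip: "locally_lipschitz_on B g"
    and N_open: "open N" and N_sub: "N \<subseteq> U"
    and x0A: "x0 \<in> A" and y0B: "y0 \<in> B"
    and p0N: "(x0, f x0) \<in> N"
    and graphs: "\<phi> ` (N \<inter> graph_over f A) = \<phi> ` N \<inter> graph_over g B"
    and alex: "alexandrov_point f x0"
    and corr: "\<phi> (x0, f x0) = (y0, g y0)"
  shows "alexandrov_point g y0"
proof -
  obtain k where U: "open U" and V: "open V" and img: "\<phi> ` U = V" and C2: "C2_on U \<phi>"
    and C2k: "C2_on V k" and kphi: "\<And>x. x \<in> U \<Longrightarrow> k (\<phi> x) = x" and phik: "\<And>y. y \<in> V \<Longrightarrow> \<phi> (k y) = y"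
    using diffeo unfolding C2_diffeo_def by blast
  define p0 where "p0 = (x0, f x0)"
  define q0 where "q0 = (y0, g y0)"
  have p0U: "p0 \<in> U" using p0N N_sub unfolding p0_def by blast
  have q0: "\<phi> p0 = q0" using corr unfolding p0_def q0_def by simp
  have q0V: "q0 \<in> V" using img p0U q0 by blast
  have kq0: "k q0 = p0" using kphi[OF p0U] q0 by simp
  obtain Dk where dk: "\<And>q. q \<in> V \<Longrightarrow> (k has_derivative blinfun_apply (Dk q)) (at q)"
    using C2k unfolding C2_on_def by blast
  define Y where "Y x = fst (\<phi> (x, f x))" for x
  define Gs where "Gs x = snd (\<phi> (x, f x))" for x
  define X where "X y = fst (k (y, g y))" for y
  obtain L\<phi> Q\<phi> where J\<phi>: "jet2 \<phi> p0 L\<phi> Q\<phi>" using C2_jet2[OF C2 U p0U] by blast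
  obtain Lf Qf where Jf: "jet2 f x0 Lf Qf" using alex_jet2[OF alex] by blast
  have Jpair: "jet2 (\<lambda>x. (x, f x)) x0 (\<lambda>h. (h, Lf h)) (\<lambda>u v. (0, Qf u v))" by (rule jet2_pair[OF Jf])
  have J\<phi>p: "jet2 \<phi> ((\<lambda>x. (x, f x)) x0) L\<phi> Q\<phi>" using J\<phi> unfolding p0_def by simp
  obtain LP QP where JP: "jet2 (\<lambda>x. \<phi> (x, f x)) x0 LP QP"
    using jet2_comp[OF Jpair J\<phi>p] by blast
  obtain aY bY where JY: "jet2 Y x0 aY bY"
    using jet2_linpost[OF JP bounded_linear_fst] unfolding Y_def by blast
  obtain aG bG where JG: "jet2 Gs x0 aG bG"
    using jet2_linpost[OF JP bounded_linear_snd] unfolding Gs_def by blast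
  have Yx0: "Y x0 = y0" unfolding Y_def using corr by simp
  have Xy0: "X y0 = x0" unfolding X_def using kq0 unfolding q0_def p0_def by simp
  obtain K1 \<delta>k where K1: "K1 > 0" "\<delta>k > 0" "\<And>q. norm (q - q0) < \<delta>k \<Longrightarrow> norm (k q - k q0) \<le> K1 * norm (q - q0)"
    using deriv_lip[OF dk[OF q0V]] by blast
  obtain eg Lg where eg: "eg > 0" and Lg: "Lg-lipschitz_on (cball y0 eg \<inter> B) g"
    using g_lip y0B unfolding locally_lipschitz_on_def by blast
  have Lg0: "Lg \<ge> 0" using Lg by (rule lipschitz_on_nonneg)
  obtain rB where rB: "rB > 0" "ball y0 rB \<subseteq> B" using B_open y0B open_contains_ball by blast
  define r1 where "r1 = min eg rB"
  have r1: "r1 > 0" using eg rB unfolding r1_def by simp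
  have inB: "y \<in> B" if "norm (y - y0) < r1" for y
    using that rB unfolding r1_def by (auto simp: dist_norm norm_minus_commute)
  have gbound: "\<bar>g y - g y0\<bar> \<le> Lg * norm (y - y0)" if "norm (y - y0) < r1" for y
  proof -
    have "y \<in> cball y0 eg \<inter> B" "y0 \<in> cball y0 eg \<inter> B"
      using that inB[OF that] y0B eg unfolding r1_def by (auto simp: dist_norm norm_minus_commute)
    from lipschitz_onD[OF Lg this] show ?thesis by (simp add: dist_norm)
  qed
  have pbound: "norm ((y, g y) - q0) \<le> (1 + Lg) * norm (y - y0)" if "norm (y - y0) < r1" for y
  proof -
    have "norm ((y, g y) - q0) = norm (y - y0, g y - g y0)" unfolding q0_def by simp
    also have "\<dots> \<le> norm (y - y0) + \<bar>g y - g y0\<bar>" using norm_Pair_le[of "y - y0" "g y - g y0"] by simp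
    also have "\<dots> \<le> norm (y - y0) + Lg * norm (y - y0)" using gbound[OF that] by simp
    finally show ?thesis by (simp add: algebra_simps)
  qed
  define \<delta>2 where "\<delta>2 = min r1 (\<delta>k / (1 + Lg))"
  have \<delta>2: "\<delta>2 > 0" unfolding \<delta>2_def using r1 K1 Lg0 by simp
  define K where "K = K1 * (1 + Lg)"
  have K: "K > 0" unfolding K_def using K1 Lg0 by simp
  have Xlip: "norm (X y - x0) \<le> K * norm (y - y0)" if y: "norm (y - y0) < \<delta>2" for y
  proof -
    have y1: "norm (y - y0) < r1" using y unfolding \<delta>2_def by simp
    have "(1 + Lg) * norm (y - y0) < (1 + Lg) * (\<delta>k / (1 + Lg))"
      using y Lg0 unfolding \<delta>2_def by (intro mult_strict_left_mono) auto
    then have "norm ((y, g y) - q0) < \<delta>k" using pbound[OF y1] Lg0 by simp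
    then have "norm (k (y, g y) - k q0) \<le> K1 * norm ((y, g y) - q0)" by (rule K1(3))
    also have "\<dots> \<le> K1 * ((1 + Lg) * norm (y - y0))" using pbound[OF y1] K1 by (intro mult_left_mono) auto
    finally have "norm (k (y, g y) - k q0) \<le> K * norm (y - y0)" unfolding K_def by (simp add: ac_simps)
    moreover have "norm (X y - x0) \<le> norm (k (y, g y) - k q0)"
      unfolding X_def kq0 p0_def using norm_fst_le[of "fst (k (y, g y)) - x0" "snd (k (y, g y)) - f x0"]
      by (metis fst_diff fst_conv prod.collapse snd_conv snd_diff)
    ultimately show ?thesis by linarith
  qed
  obtain rN where rN: "rN > 0" "ball p0 rN \<subseteq> N" using N_open p0N open_contains_ball unfolding p0_def by blast
  obtain rA where rA: "rA > 0" "ball x0 rA \<subseteq> A" using A_open x0A open_contains_ball by blast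
  obtain Cp dp where Cp: "Cp > 0" "dp > 0" "\<And>h. norm h < dp \<Longrightarrow> norm ((x0 + h, f (x0 + h)) - (x0, f x0)) \<le> Cp * norm h"
    using jet2_bound[OF Jpair] by blast
  define \<rho> where "\<rho> = min (min rA dp) (rN / Cp)"
  have \<rho>: "\<rho> > 0" unfolding \<rho>_def using rA Cp rN by simp
  have left: "X (Y x) = x" if x: "norm (x - x0) < \<rho>" for x
  proof -
    define h where "h = x - x0"
    have xh: "x = x0 + h" unfolding h_def by simp
    have "norm ((x, f x) - p0) \<le> Cp * norm h" using Cp(3)[of h] x unfolding \<rho>_def h_def p0_def by simp
    also have "\<dots> < Cp * (rN / Cp)" using x Cp unfolding \<rho>_def h_def by (intro mult_strict_left_mono) auto
    finally have "(x, f x) \<in> N" using rN Cp by (auto simp: dist_norm norm_minus_commute)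
    moreover have "x \<in> A" using x rA unfolding \<rho>_def by (auto simp: dist_norm norm_minus_commute)
    ultimately have "(x, f x) \<in> N \<inter> graph_over f A" unfolding graph_over_def by blast
    then have "\<phi> (x, f x) \<in> graph_over g B" using graphs by blast
    then obtain y where y: "\<phi> (x, f x) = (y, g y)" unfolding graph_over_def by blast
    have "(x, f x) \<in> U" using \<open>(x, f x) \<in> N\<close> N_sub by blast
    then have "k (y, g y) = (x, f x)" using kphi y by metis
    then show ?thesis unfolding X_def Y_def y by simp
  qed
  have kcont: "continuous_on V k"
    using dk by (meson continuous_at_imp_continuous_on has_derivative_continuous)
  have phiN: "\<phi> ` N = V \<inter> k -` N"
  proof
    show "\<phi> ` N \<subseteq> V \<inter> k -` N" using N_sub img kphi by auto
    show "V \<inter> k -` N \<subseteq> \<phi> ` N" using phik by (auto intro: image_eqI[where x="k _"] simp: image_iff) (metis)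
  qed
  have open_phiN: "open (\<phi> ` N)" unfolding phiN by (rule continuous_open_preimage[OF kcont V N_open])
  have q0N: "q0 \<in> \<phi> ` N" using q0 p0N unfolding p0_def by blast
  obtain rq where rq: "rq > 0" "ball q0 rq \<subseteq> \<phi> ` N" using open_phiN q0N open_contains_ball by blast
  define \<delta>1 where "\<delta>1 = min r1 (rq / (1 + Lg))"
  have \<delta>1: "\<delta>1 > 0" unfolding \<delta>1_def using r1 rq Lg0 by simp
  have right: "Y (X y) = y \<and> Gs (X y) = g y" if y: "norm (y - y0) < \<delta>1" for y
  proof -
    have y1: "norm (y - y0) < r1" using y unfolding \<delta>1_def by simp
    have "(1 + Lg) * norm (y - y0) < (1 + Lg) * (rq / (1 + Lg))"
      using y Lg0 unfolding \<delta>1_def by (intro mult_strict_left_mono) auto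
    then have "norm ((y, g y) - q0) < rq" using pbound[OF y1] Lg0 by simp
    then have "(y, g y) \<in> \<phi> ` N" using rq by (auto simp: dist_norm norm_minus_commute)
    moreover have "(y, g y) \<in> graph_over g B" using inB[OF y1] unfolding graph_over_def by blast
    ultimately have "(y, g y) \<in> \<phi> ` (N \<inter> graph_over f A)" using graphs by blast
    then obtain x where x: "(x, f x) \<in> N" "\<phi> (x, f x) = (y, g y)" unfolding graph_over_def by fastforce
    have "(x, f x) \<in> U" using x N_sub by blast
    then have "k (y, g y) = (x, f x)" using kphi x by metis
    then have "X y = x" unfolding X_def by simp
    then show ?thesis unfolding Y_def Gs_def using x by simp
  qed
  obtain ai where ai: "bounded_linear ai" "\<And>v. ai (aY v) = v"
    using jet2_invertible[OF JY Yx0 \<rho> left K \<delta>2 Xlip] by blast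
  have JX: "jet2 X y0 ai (\<lambda>u v. - ai (bY (ai u) (ai v)))"
    by (rule jet2_inverse[OF JY ai Xy0 Yx0 \<delta>1 _ K \<delta>2 Xlip]) (use right in blast)
  have JG': "jet2 Gs (X y0) aG bG" using JG Xy0 by simp
  obtain Lg' Qg' where J: "jet2 (\<lambda>y. Gs (X y)) y0 Lg' Qg'" using jet2_comp[OF JX JG'] by blast
  have "jet2 g y0 Lg' Qg'"
  proof (rule jet2_local[OF J, of "ball y0 \<delta>1"])
    show "open (ball y0 \<delta>1)" by simp
    show "y0 \<in> ball y0 \<delta>1" using \<delta>1 by simp
    fix y assume "y \<in> ball y0 \<delta>1"
    then have "norm (y - y0) < \<delta>1" by (simp add: dist_norm norm_minus_commute)
    then show "Gs (X y) = g y" using right by blast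
  qed
  then show ?thesis by (rule jet2_alex)
qed

end
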